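(* Let $E\subset\mathbb{R}^2$, let $E_o:=\{(x,y)\in E: x\neq y\}$, and let $C\subseteq E_o$ be connected in $E_o$. If uniqueness of portfolio positions holds at some point of $C$, then uniqueness of portfolio positions holds at all points of $C$. Likewise, if convergence of portfolio positions holds at some point of $C$, then convergence of portfolio positions holds at all points of $C$.
   Context: A semistatic strategy on $E$ is a function $v:E\to\mathbb{R}$ for which there exist $h,g:\mathbb{R}\to\mathbb{R}$ (a stock position $h$ and option position $g$) with $v(x,y)=h(x)(y-x)+g(y)$ for all $(x,y)\in E$; such a pair $(h,g)$ is called a portfolio position of $v$. Two points $(x,y),(x',y')\in E_o$ are connected if there exist $k\in\mathbb{N}_0$ and $(x_i,y_i)_{i=1}^k\in E_o^k$ such that all points of the list $(x,y),(x_1,y),(x_1,y_1),(x_2,y_1),\dots,(x_k,y_k),(x',y_k),(x',y')$ belong to $E_o$; a set $C\subseteq E_o$ is connected (in $E_o$) if any two of its points are connected. Uniqueness of portfolio positions holds at $(x,y)\in E$ if for every semistatic strategy $v$ on $E$, the values $h(x)$ and $g(y)$ are the same for all portfolio positions $(h,g)$ of $v$. In that situation, convergence of portfolio positions holds at $(x,y)$ if for any semistatic strategies $v_n$ on $E$ converging pointwise on $E$, with portfolio positions $(h_n,g_n)$, the sequences $h_n(x)$ and $g_n(y)$ converge. *)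

theory Defs
  imports "HOL-Analysis.Analysis"
begin

type_synonym point = "real \<times> real"

definition portfolio_position :: "point set \<Rightarrow> (point \<Rightarrow> real) \<Rightarrow> (real \<Rightarrow> real) \<Rightarrow> (real \<Rightarrow> real) \<Rightarrow> bool" where
  "portfolio_position E v h g \<longleftrightarrow> (\<forall>(x,y)\<in>E. v (x,y) = h x * (y - x) + g y)"

definition semistatic :: "point set \<Rightarrow> (point \<Rightarrow> real) \<Rightarrow> bool" where
  "semistatic E v \<longleftrightarrow> (\<exists>h g. portfolio_position E v h g)"

definition off_diag :: "point set \<Rightarrow> point set" where
  "off_diag E = {(x,y) \<in> E. x \<noteq> y}"

text \<open>Points (x,y),(x',y') connected in Eo: a zigzag list
  (x_0,y_0),(x_1,y_0),(x_1,y_1),...,(x_{k+1},y_k),(x_{k+1},y_{k+1}) in Eo with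
  (x_0,y_0)=(x,y) and (x_{k+1},y_{k+1})=(x',y').\<close>
definition pts_connected :: "point set \<Rightarrow> point \<Rightarrow> point \<Rightarrow> bool" where
  "pts_connected Eo p q \<longleftrightarrow>
     (\<exists>(k::nat) (xs::nat \<Rightarrow> real) (ys::nat \<Rightarrow> real).
        (xs 0, ys 0) = p \<and> (xs (Suc k), ys (Suc k)) = q \<and>
        (\<forall>i \<le> Suc k. (xs i, ys i) \<in> Eo) \<and>
        (\<forall>i \<le> k. (xs (Suc i), ys i) \<in> Eo))"

definition connected_in_Eo :: "point set \<Rightarrow> point set \<Rightarrow> bool" where
  "connected_in_Eo Eo C \<longleftrightarrow> C \<subseteq> Eo \<and> (\<forall>p\<in>C. \<forall>q\<in>C. pts_connected Eo p q)"

definition uniqueness_at :: "point set \<Rightarrow> point \<Rightarrow> bool" where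
  "uniqueness_at E p \<longleftrightarrow>
     (\<forall>v h g h' g'. semistatic E v \<and> portfolio_position E v h g \<and> portfolio_position E v h' g'
        \<longrightarrow> h (fst p) = h' (fst p) \<and> g (snd p) = g' (snd p))"

text \<open>Convergence is only defined in the situation where uniqueness holds; we include it.\<close>
definition convergence_at :: "point set \<Rightarrow> point \<Rightarrow> bool" where
  "convergence_at E p \<longleftrightarrow> uniqueness_at E p \<and>
     (\<forall>(v::nat \<Rightarrow> point \<Rightarrow> real) h g.
        (\<forall>n. semistatic E (v n) \<and> portfolio_position E (v n) (h n) (g n)) \<and>
        (\<forall>q\<in>E. convergent (\<lambda>n. v n q))
        \<longrightarrow> convergent (\<lambda>n. h n (fst p)) \<and> convergent (\<lambda>n. g n (snd p)))"

end

theory Submission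
  imports Defs
begin

lemma chain_prop:
  assumes pc: "pts_connected Eo p q"
    and link: "\<And>a b. (a,b) \<in> Eo \<Longrightarrow> (H a \<longleftrightarrow> G b)"
    and hp: "H (fst p)"
  shows "H (fst q) \<and> G (snd q)"
proof -
  obtain k xs ys where
    p0: "(xs 0, ys 0) = p" and qk: "(xs (Suc k), ys (Suc k)) = q" and
    d: "\<forall>i \<le> Suc k. (xs i, ys i) \<in> Eo" and o: "\<forall>i \<le> k. (xs (Suc i), ys i) \<in> Eo"
    using pc unfolding pts_connected_def by blast
  have "\<forall>i. i \<le> Suc k \<longrightarrow> H (xs i)"
  proof
    fix i show "i \<le> Suc k \<longrightarrow> H (xs i)"
    proof (induction i)
      case 0 then show ?case using hp p0 by auto
    next
      case (Suc i)
      show ?case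
      proof
        assume "Suc i \<le> Suc k"
        then have "H (xs i)" using Suc by simp
        then have "G (ys i)" using link[of "xs i" "ys i"] d \<open>Suc i \<le> Suc k\<close> by simp
        then show "H (xs (Suc i))" using link o \<open>Suc i \<le> Suc k\<close> by auto
      qed
    qed
  qed
  then have "H (xs (Suc k))" by simp
  moreover then have "G (ys (Suc k))" using link d by auto
  ultimately show ?thesis using qk by auto
qed

lemma part1:
  assumes c: "connected_in_Eo (off_diag E) C" and p: "p \<in> C" and up: "uniqueness_at E p"
    and q: "q \<in> C"
  shows "uniqueness_at E q"
  unfolding uniqueness_at_def
proof (intro allI impI)
  fix v h g h' g'
  assume a: "semistatic E v \<and> portfolio_position E v h g \<and> portfolio_position E v h' g'"
  have pc: "pts_connected (off_diag E) p q" using c p q unfolding connected_in_Eo_def by blast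
  have "h (fst q) = h' (fst q) \<and> g (snd q) = g' (snd q)"
  proof (rule chain_prop[OF pc, where H="\<lambda>a. h a = h' a" and G="\<lambda>b. g b = g' b"])
    fix a b assume ab: "(a,b) \<in> off_diag E"
    then have "(a,b) \<in> E" "a \<noteq> b" unfolding off_diag_def by auto
    then have e: "h a * (b - a) + g b = h' a * (b - a) + g' b"
      using a unfolding portfolio_position_def by fastforce
    have "b - a \<noteq> 0" using \<open>a \<noteq> b\<close> by simp
    show "h a = h' a \<longleftrightarrow> g b = g' b"
    proof
      assume "h a = h' a" then show "g b = g' b" using e by simp
    next
      assume "g b = g' b" then have "h a * (b - a) = h' a * (b - a)" using e by simp
      then show "h a = h' a" using \<open>b - a \<noteq> 0\<close> by simp
    qed
  next
    show "h (fst p) = h' (fst p)" using up a unfolding uniqueness_at_def by blast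
  qed
  then show "h (fst q) = h' (fst q) \<and> g (snd q) = g' (snd q)" .
qed

lemma part2:
  assumes c: "connected_in_Eo (off_diag E) C" and p: "p \<in> C" and up: "convergence_at E p"
    and q: "q \<in> C"
  shows "convergence_at E q"
  unfolding convergence_at_def
proof (intro conjI allI impI)
  show "uniqueness_at E q" using part1[OF c p _ q] up unfolding convergence_at_def by blast
next
  fix v :: "nat \<Rightarrow> point \<Rightarrow> real" and h g
  assume a: "(\<forall>n. semistatic E (v n) \<and> portfolio_position E (v n) (h n) (g n)) \<and>
        (\<forall>q\<in>E. convergent (\<lambda>n. v n q))"
  have pc: "pts_connected (off_diag E) p q" using c p q unfolding connected_in_Eo_def by blast
  have "convergent (\<lambda>n. h n (fst q)) \<and> convergent (\<lambda>n. g n (snd q))"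
  proof (rule chain_prop[OF pc, where H="\<lambda>a. convergent (\<lambda>n. h n a)" and G="\<lambda>b. convergent (\<lambda>n. g n b)"])
    fix a b assume ab: "(a,b) \<in> off_diag E"
    then have "(a,b) \<in> E" "a \<noteq> b" unfolding off_diag_def by auto
    then have e: "\<And>n. v n (a,b) = h n a * (b - a) + g n b"
      using a unfolding portfolio_position_def by fastforce
    have cv: "convergent (\<lambda>n. v n (a,b))" using a \<open>(a,b) \<in> E\<close> by blast
    have "b - a \<noteq> 0" using \<open>a \<noteq> b\<close> by simp
    show "convergent (\<lambda>n. h n a) \<longleftrightarrow> convergent (\<lambda>n. g n b)"
    proof
      assume "convergent (\<lambda>n. h n a)"
      then have "convergent (\<lambda>n. v n (a,b) - h n a * (b - a))"
        using cv \<open>b - a \<noteq> 0\<close> by (intro convergent_diff convergent_mult_const_right_iff[THEN iffD2]) auto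
      moreover have "(\<lambda>n. v n (a,b) - h n a * (b - a)) = (\<lambda>n. g n b)" using e by auto
      ultimately show "convergent (\<lambda>n. g n b)" by simp
    next
      assume "convergent (\<lambda>n. g n b)"
      then have "convergent (\<lambda>n. (v n (a,b) - g n b) * (1 / (b - a)))"
        using cv \<open>b - a \<noteq> 0\<close> by (intro convergent_diff convergent_mult_const_right_iff[THEN iffD2]) auto
      moreover have "(\<lambda>n. (v n (a,b) - g n b) * (1 / (b - a))) = (\<lambda>n. h n a)"
        using e \<open>b - a \<noteq> 0\<close> by auto
      ultimately show "convergent (\<lambda>n. h n a)" by simp
    qed
  next
    show "convergent (\<lambda>n. h n (fst p))" using up a unfolding convergence_at_def by blast
  qed
  then show "convergent (\<lambda>n. h n (fst q))" "convergent (\<lambda>n. g n (snd q))" by auto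
qed

theorem lemma2p4:
  fixes E C :: "(real \<times> real) set"
  assumes "connected_in_Eo (off_diag E) C"
  shows "((\<exists>p\<in>C. uniqueness_at E p) \<longrightarrow> (\<forall>q\<in>C. uniqueness_at E q)) \<and>
         ((\<exists>p\<in>C. convergence_at E p) \<longrightarrow> (\<forall>q\<in>C. convergence_at E q))"
  using part1[OF assms] part2[OF assms] by blast

end
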